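(* Let $K\subseteq\mathbb{R}^n$ be a bounded star-shaped set with diameter $d$, and let $\sigma>0$. For any $\varepsilon\in(0,1/2)$, $$\mathfrak{M}\gtrsim \varepsilon\sigma^2\wedge d^2,$$ i.e. $\mathfrak{M}\ge a\,(\varepsilon\sigma^2\wedge d^2)$ for some absolute constant $a>0$.
   Context: Model: the unknown mean $\mu$ lies in $K$. The uncorrupted sample is $\tilde X_i=\mu+\xi_i$, $i=1,\dots,N$, with $\xi_i$ i.i.d. copies of $\xi$ whose distribution belongs to $\Xi_{\sigma^2}$, the family of all distributions on $\mathbb{R}^n$ with mean zero and covariance $\Sigma\preceq\sigma^2 I$. An adversary $\mathcal{C}$, which may inspect the whole uncorrupted sample and knows the model and estimator, replaces at most $\varepsilon N$ of the points by arbitrary points; one observes $X=\mathcal{C}(\tilde X)$. The minimax risk is $$\mathfrak{M}=\inf_{\hat\mu}\sup_{\mu\in K}\sup_{\xi\in\Xi_{\sigma^2}}\sup_{\mathcal{C}}\mathbb{E}_\mu\|\hat\mu(\mathcal{C}(\tilde X))-\mu\|^2.$$ Star-shaped: there is $k^*\in K$ with $(1-t)k^*+tk\in K$ for all $k\in K$, $t\in[0,1]$. Diameter $d=\sup_{x,y\in K}\|x-y\|$; $a\wedge b=\min(a,b)$. *)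

theory Defs
  imports "HOL-Probability.Probability"
begin

text \<open>Vectors of R^n are represented as extensional functions on the index set {..<n},
  i.e. elements of the space of the finite product measure below. This allows the
  dimension n to be quantified inside the statement (needed for an absolute constant).\<close>

definition vec_space :: "nat \<Rightarrow> (nat \<Rightarrow> real) measure" where
  "vec_space n = Pi\<^sub>M {..<n} (\<lambda>_. borel)"

definition vadd :: "nat \<Rightarrow> (nat \<Rightarrow> real) \<Rightarrow> (nat \<Rightarrow> real) \<Rightarrow> (nat \<Rightarrow> real)" where
  "vadd n x y = (\<lambda>i\<in>{..<n}. x i + y i)"

definition sqnorm :: "nat \<Rightarrow> (nat \<Rightarrow> real) \<Rightarrow> real" where
  "sqnorm n x = (\<Sum>i<n. (x i)\<^sup>2)"

definition diam_n :: "nat \<Rightarrow> (nat \<Rightarrow> real) set \<Rightarrow> real" where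
  "diam_n n K = (SUP x\<in>K. SUP y\<in>K. sqrt (sqnorm n (\<lambda>i. x i - y i)))"

definition bounded_n :: "nat \<Rightarrow> (nat \<Rightarrow> real) set \<Rightarrow> bool" where
  "bounded_n n K \<longleftrightarrow> (\<exists>B. \<forall>x\<in>K. sqnorm n x \<le> B)"

definition star_shaped_n :: "nat \<Rightarrow> (nat \<Rightarrow> real) set \<Rightarrow> bool" where
  "star_shaped_n n K \<longleftrightarrow> (\<exists>ks\<in>K. \<forall>k\<in>K. \<forall>t\<in>{0..1::real}.
      (\<lambda>i\<in>{..<n}. (1 - t) * ks i + t * k i) \<in> K)"

text \<open>The family Xi_{sg^2}: distributions on R^n with mean zero and covariance
  Sigma \<preceq> sg^2 I (second moments finite, v^T Sigma v \<le> sg^2 for unit v).\<close>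
definition Xi :: "nat \<Rightarrow> real \<Rightarrow> (nat \<Rightarrow> real) measure set" where
  "Xi n s2 = {P. prob_space P \<and> sets P = sets (vec_space n) \<and>
      (\<forall>i<n. integrable P (\<lambda>x. x i) \<and> integrable P (\<lambda>x. (x i)\<^sup>2) \<and> (\<integral>x. x i \<partial>P) = 0) \<and>
      (\<forall>v. (\<Sum>i<n. (v i)\<^sup>2) = 1 \<longrightarrow> (\<integral>x. (\<Sum>i<n. v i * x i)\<^sup>2 \<partial>P) \<le> s2)}"

definition sample_space :: "nat \<Rightarrow> nat \<Rightarrow> (nat \<Rightarrow> nat \<Rightarrow> real) measure" where
  "sample_space n N = Pi\<^sub>M {..<N} (\<lambda>_. vec_space n)"

definition clean_sample :: "nat \<Rightarrow> nat \<Rightarrow> (nat \<Rightarrow> real) \<Rightarrow> (nat \<Rightarrow> real) measure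
    \<Rightarrow> (nat \<Rightarrow> nat \<Rightarrow> real) measure" where
  "clean_sample n N mu P = distr (Pi\<^sub>M {..<N} (\<lambda>_. P)) (sample_space n N)
      (\<lambda>xs. \<lambda>j\<in>{..<N}. vadd n mu (xs j))"

definition adversaries :: "nat \<Rightarrow> nat \<Rightarrow> real \<Rightarrow> ((nat \<Rightarrow> nat \<Rightarrow> real) \<Rightarrow> (nat \<Rightarrow> nat \<Rightarrow> real)) set" where
  "adversaries n N eps = {C \<in> measurable (sample_space n N) (sample_space n N).
      \<forall>X\<in>space (sample_space n N). real (card {j\<in>{..<N}. C X j \<noteq> X j}) \<le> eps * real N}"

definition estimators :: "nat \<Rightarrow> nat \<Rightarrow> ((nat \<Rightarrow> nat \<Rightarrow> real) \<Rightarrow> (nat \<Rightarrow> real)) set" where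
  "estimators n N = measurable (sample_space n N) (vec_space n)"

definition risk :: "nat \<Rightarrow> nat \<Rightarrow> ((nat \<Rightarrow> nat \<Rightarrow> real) \<Rightarrow> (nat \<Rightarrow> real)) \<Rightarrow> (nat \<Rightarrow> real)
    \<Rightarrow> (nat \<Rightarrow> real) measure \<Rightarrow> ((nat \<Rightarrow> nat \<Rightarrow> real) \<Rightarrow> (nat \<Rightarrow> nat \<Rightarrow> real)) \<Rightarrow> ennreal" where
  "risk n N est mu P C =
     (\<integral>\<^sup>+ X. ennreal (sqnorm n (\<lambda>i. est (C X) i - mu i)) \<partial>(clean_sample n N mu P))"

definition minimax_risk :: "nat \<Rightarrow> nat \<Rightarrow> real \<Rightarrow> real \<Rightarrow> (nat \<Rightarrow> real) set \<Rightarrow> ennreal" where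
  "minimax_risk n N eps sg K =
     (INF est\<in>estimators n N. SUP mu\<in>K. SUP P\<in>Xi n (sg\<^sup>2). SUP C\<in>adversaries n N eps.
        risk n N est mu P C)"

end

theory Submission
  imports Defs
begin


definition advC :: "nat \<Rightarrow> nat \<Rightarrow> (nat \<Rightarrow> real) \<Rightarrow> nat \<Rightarrow> (nat \<Rightarrow> nat \<Rightarrow> real) \<Rightarrow> (nat \<Rightarrow> nat \<Rightarrow> real)" where
  "advC n N c m = (\<lambda>X. if (\<Sum>j<N. if (\<forall>i<n. X j i = c i) then 0 else 1::real) \<le> real m
      then (\<lambda>j\<in>{..<N}. c) else X)"

lemma comp_meas: "i < n \<Longrightarrow> (\<lambda>x. x i) \<in> borel_measurable (vec_space n)"
  unfolding vec_space_def by (rule measurable_component_singleton) simp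

lemma samp_meas: "j < N \<Longrightarrow> (\<lambda>X. X j) \<in> measurable (sample_space n N) (vec_space n)"
  unfolding sample_space_def by (rule measurable_component_singleton) simp

lemma samp_comp_meas: "j < N \<Longrightarrow> i < n \<Longrightarrow> (\<lambda>X. X j i) \<in> borel_measurable (sample_space n N)"
  using measurable_compose[OF samp_meas comp_meas] by simp

lemma sqnorm_meas: "f \<in> measurable M (vec_space n) \<Longrightarrow> (\<lambda>x. sqnorm n (\<lambda>i. f x i - mu i)) \<in> borel_measurable M"
proof -
  assume f: "f \<in> measurable M (vec_space n)"
  have *: "(\<lambda>x. f x i) \<in> borel_measurable M" if "i < n" for i
    using measurable_compose[OF f comp_meas[OF that]] by simp
  show ?thesis unfolding sqnorm_def
  proof (rule borel_measurable_sum)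
    fix i assume "i \<in> {..<n}"
    then have "(\<lambda>x. f x i) \<in> borel_measurable M" by (simp add: *)
    then show "(\<lambda>x. (f x i - mu i)\<^sup>2) \<in> borel_measurable M"
      by (rule borel_measurable_power[OF borel_measurable_diff[OF _ borel_measurable_const]])
  qed
qed

lemma cnt_term_pred0: "j < N \<Longrightarrow> i < n \<Longrightarrow> Measurable.pred (sample_space n N) (\<lambda>X. X j i = c i)"
  by (rule pred_eq_const1[OF samp_comp_meas]) (assumption+, rule borel_closed, rule closed_singleton)
lemma cnt_term_pred1: "j < N \<Longrightarrow> Measurable.pred (sample_space n N) (\<lambda>X. \<forall>i\<in>{..<n}. X j i = c i)"
  by (rule pred_intros_finite(3)) (simp_all add: cnt_term_pred0)
lemma cnt_term_pred: "j < N \<Longrightarrow> Measurable.pred (sample_space n N) (\<lambda>X. \<forall>i<n. X j i = c i)"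
  using cnt_term_pred1[of j N n c] by (simp only: Ball_def lessThan_iff)

lemma u1: "j < N \<Longrightarrow> {X \<in> space (sample_space n N). \<forall>i<n. X j i = c i} \<in> sets (sample_space n N)"
  using cnt_term_pred[of j N n c] unfolding pred_def .
lemma u2: "j < N \<Longrightarrow> (\<lambda>X. if (\<forall>i<n. X j i = c i) then 0 else 1::real) \<in> borel_measurable (sample_space n N)"
  by (rule measurable_If[OF measurable_const measurable_const u1]) (simp_all only: space_borel UNIV_I)
lemma cnt_meas: "(\<lambda>X. (\<Sum>j<N. if (\<forall>i<n. X j i = c i) then 0 else 1::real)) \<in> borel_measurable (sample_space n N)"
  by (rule borel_measurable_sum) (rule u2, simp)

lemma advC_meas: assumes "c \<in> space (vec_space n)"
  shows "advC n N c m \<in> measurable (sample_space n N) (sample_space n N)"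
proof -
  have cb: "(\<lambda>j\<in>{..<N}. c) \<in> space (sample_space n N)" using assms by (simp add: sample_space_def space_PiM)
  have "Measurable.pred (sample_space n N) (\<lambda>X. (\<Sum>j<N. if (\<forall>i<n. X j i = c i) then 0 else 1::real) \<le> real m)"
    by (rule pred_le_const[OF cnt_meas]) (rule borel_closed, rule closed_atMost)
  then have "{X \<in> space (sample_space n N). (\<Sum>j<N. if (\<forall>i<n. X j i = c i) then 0 else 1::real) \<le> real m} \<in> sets (sample_space n N)"
    unfolding pred_def .
  then show ?thesis unfolding advC_def
    by (rule measurable_If[OF measurable_const[OF cb] measurable_ident_sets[OF refl]])
qed
lemma space_vec: "space (vec_space n) = {..<n} \<rightarrow>\<^sub>E UNIV"
  by (simp add: vec_space_def space_PiM)

lemma space_samp: "space (sample_space n N) = {..<N} \<rightarrow>\<^sub>E space (vec_space n)"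
  by (simp add: sample_space_def space_PiM)


lemma card_as_sum: "finite A \<Longrightarrow> real (card {j\<in>A. \<not> P j}) = (\<Sum>j\<in>A. if P j then 0 else 1::real)"
  by (simp add: sum.If_cases Int_def conj_commute)

lemma advC_adv: assumes c: "c \<in> space (vec_space n)" and m: "real m \<le> eps * real N"
  shows "advC n N c m \<in> adversaries n N eps"
  unfolding adversaries_def
proof (intro CollectI conjI ballI advC_meas[OF c])
  fix X assume X: "X \<in> space (sample_space n N)"
  show "real (card {j \<in> {..<N}. advC n N c m X j \<noteq> X j}) \<le> eps * real N"
  proof (cases "(\<Sum>j<N. if (\<forall>i<n. X j i = c i) then 0 else 1::real) \<le> real m")
    case True
    have sub: "{j \<in> {..<N}. advC n N c m X j \<noteq> X j} \<subseteq> {j \<in> {..<N}. \<not> (\<forall>i<n. X j i = c i)}"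
    proof safe
      fix j i assume j: "j < N" and ne: "advC n N c m X j \<noteq> X j" and all: "\<forall>i<n. X j i = c i"
      have "X j \<in> {..<n} \<rightarrow>\<^sub>E UNIV" using X j by (auto simp: space_samp space_vec)
      moreover have "c \<in> {..<n} \<rightarrow>\<^sub>E UNIV" using c by (simp add: space_vec)
      ultimately have "X j = c" using all by (intro extensionalityI[of _ "{..<n}"]) (auto simp: PiE_iff)
      then show False using ne j True by (simp add: advC_def)
    qed
    have "real (card {j \<in> {..<N}. advC n N c m X j \<noteq> X j}) \<le> real (card {j \<in> {..<N}. \<not> (\<forall>i<n. X j i = c i)})"
      using sub by (intro of_nat_mono card_mono) auto
    also have "\<dots> = (\<Sum>j<N. if (\<forall>i<n. X j i = c i) then 0 else 1::real)"
      by (rule card_as_sum) simp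
    finally show ?thesis using True m by linarith
  next
    case False
    then show ?thesis using m by (simp add: advC_def)
    qed
qed

lemma Y_meas: "(\<lambda>xs. \<lambda>j\<in>{..<N}. vadd n mu (xs j)) \<in> measurable (PiM {..<N} (\<lambda>_. vec_space n)) (sample_space n N)"
proof -
  have *: "(\<lambda>xs. xs j i) \<in> borel_measurable (PiM {..<N} (\<lambda>_. PiM {..<n} (\<lambda>_. borel)))" if "j < N" "i < n" for j i
    using measurable_compose[OF measurable_component_singleton[of j "{..<N}" "\<lambda>_. PiM {..<n} (\<lambda>_. borel)"]
       measurable_component_singleton[of i "{..<n}" "\<lambda>_. borel"]] that
    by simp
  have "(\<lambda>xs. vadd n mu (xs j)) \<in> measurable (PiM {..<N} (\<lambda>_. vec_space n)) (vec_space n)" if "j < N" for j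
    unfolding vadd_def vec_space_def
    by (intro measurable_restrict borel_measurable_add borel_measurable_const *) (use that in auto)
  then show ?thesis unfolding sample_space_def by (intro measurable_restrict) auto
qed



lemma g_meas: "(\<lambda>x. if (\<forall>i<n. mu i + x i = c i) then 0 else 1::real) \<in> borel_measurable (vec_space n)"
proof -
  have p0: "Measurable.pred (vec_space n) (\<lambda>x. mu i + x i = c i)" if "i \<in> {..<n}" for i
  proof -
    have "i < n" using that by simp
    show ?thesis
      by (rule pred_eq_const1[OF borel_measurable_add[OF borel_measurable_const comp_meas[OF \<open>i < n\<close>]]])
         (rule borel_closed, rule closed_singleton)
  qed
  have "Measurable.pred (vec_space n) (\<lambda>x. \<forall>i\<in>{..<n}. mu i + x i = c i)"
    by (rule pred_intros_finite(3)) (rule finite_lessThan, rule p0)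
  then have "Measurable.pred (vec_space n) (\<lambda>x. \<forall>i<n. mu i + x i = c i)"
    by (simp only: Ball_def lessThan_iff)
  then have S: "{x \<in> space (vec_space n). \<forall>i<n. mu i + x i = c i} \<in> sets (vec_space n)"
    unfolding pred_def .
  show ?thesis
    by (rule measurable_If[OF measurable_const measurable_const S]) (simp_all only: space_borel UNIV_I)
qed

lemma risk_lb:
  assumes c: "c \<in> space (vec_space n)" and est: "est \<in> estimators n N"
    and P: "prob_space P" and Psets: "sets P = sets (vec_space n)"
    and pb: "(\<integral>x. (if (\<forall>i<n. mu i + x i = c i) then 0 else 1::real) \<partial>P) \<le> p"
    and pN: "real N * p \<le> (real m + 1) / 2"
  shows "ennreal (sqnorm n (\<lambda>i. est (\<lambda>j\<in>{..<N}. c) i - mu i) / 2) \<le> risk n N est mu P (advC n N c m)"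
proof -
  define M where "M = PiM {..<N} (\<lambda>_. P)"
  define Y where "Y = (\<lambda>xs. \<lambda>j\<in>{..<N}. vadd n mu (xs j))"
  define cnt where "cnt = (\<lambda>X. \<Sum>j<N. if (\<forall>i<n. X j i = c i) then 0 else 1::real)"
  define S where "S = sample_space n N"
  define E where "E = {X \<in> space S. cnt X \<le> real m}"
  define cbar where "cbar = (\<lambda>j\<in>{..<N}. c)"
  define sq where "sq = sqnorm n (\<lambda>i. est cbar i - mu i)"
  define g where "g = (\<lambda>x. if (\<forall>i<n. mu i + x i = c i) then 0 else 1::real)"
  interpret M: prob_space M unfolding M_def by (intro prob_space_PiM P)
  interpret Pp: prob_space P by (rule P)
  interpret PP: product_prob_space "\<lambda>_. P" "{..<N}" 
    by (unfold_locales; (rule Pp.sigma_finite_countable)?; simp add: Pp.emeasure_space_1)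
  have MS: "measurable M S = measurable (PiM {..<N} (\<lambda>_. vec_space n)) S"
    unfolding M_def by (intro measurable_cong_sets sets_PiM_cong) (auto simp: Psets)
  have "Y \<in> measurable (PiM {..<N} (\<lambda>_. vec_space n)) S"
    unfolding Y_def S_def by (rule Y_meas)
  then have measY: "Y \<in> measurable M S" unfolding MS .
  have cntm: "cnt \<in> borel_measurable S" unfolding cnt_def S_def by (rule cnt_meas)
  have measE: "E \<in> sets S"
  proof -
    have "Measurable.pred S (\<lambda>X. cnt X \<le> real m)"
      by (rule pred_le_const[OF cntm]) (rule borel_closed, rule closed_atMost)
    then show ?thesis unfolding pred_def E_def .
  qed
  have gP: "g \<in> borel_measurable P"
    unfolding g_def measurable_cong_sets[OF Psets refl] by (rule g_meas)
  have "sq \<ge> 0" unfolding sq_def sqnorm_def by (intro sum_nonneg) auto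
  have "risk n N est mu P (advC n N c m) = (\<integral>\<^sup>+ X. ennreal (sqnorm n (\<lambda>i. est (advC n N c m X) i - mu i)) \<partial>distr M S Y)"
    by (simp only: risk_def clean_sample_def M_def S_def Y_def)
  also have "\<dots> \<ge> (\<integral>\<^sup>+ X. ennreal sq * indicator E X \<partial>distr M S Y)"
  proof (intro nn_integral_mono)
    fix X assume "X \<in> space (distr M S Y)"
    show "ennreal sq * indicator E X \<le> ennreal (sqnorm n (\<lambda>i. est (advC n N c m X) i - mu i))"
    proof (cases "X \<in> E")
      case True
      then have "advC n N c m X = cbar" by (simp add: E_def cnt_def advC_def cbar_def)
      then show ?thesis using True by (simp add: sq_def)
    next
      case False then show ?thesis by simp
    qed
  qed
  also have "(\<integral>\<^sup>+ X. ennreal sq * indicator E X \<partial>distr M S Y) = ennreal sq * emeasure M (Y -` E \<inter> space M)"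
    by (simp only: nn_integral_cmult_indicator[of E "distr M S Y"] sets_distr emeasure_distr[OF measY measE] measE)
  finally have R: "ennreal sq * emeasure M (Y -` E \<inter> space M) \<le> risk n N est mu P (advC n N c m)" .
  have Yspace: "Y xs \<in> space S" if "xs \<in> space M" for xs
    using measurable_space[OF measY that] .
  have preE: "Y -` E \<inter> space M = {xs\<in>space M. cnt (Y xs) \<le> real m}"
    using Yspace unfolding E_def by blast
  have cntY: "cnt (Y xs) = (\<Sum>j<N. g (xs j))" for xs
    unfolding cnt_def Y_def g_def
    by (intro sum.cong refl) (simp add: vadd_def)
  have cntYm: "(\<lambda>xs. cnt (Y xs)) \<in> borel_measurable M"
    using measurable_compose[OF measY cntm] .
  have cnt_bd: "0 \<le> cnt X \<and> cnt X \<le> real N" for X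
  proof
    show "0 \<le> cnt X" unfolding cnt_def by (rule sum_nonneg) simp
    have "cnt X \<le> (\<Sum>j<N. 1::real)" unfolding cnt_def by (rule sum_mono) simp
    then show "cnt X \<le> real N" by simp
  qed
  have intY: "integrable M (\<lambda>xs. cnt (Y xs))"
  proof (rule M.integrable_const_bound[where B="real N"])
    show "AE x in M. norm (cnt (Y x)) \<le> real N"
      by (rule AE_I2) (metis abs_of_nonneg cnt_bd real_norm_def)
  qed (rule cntYm)
  have gj: "(\<integral>xs. g (xs j) \<partial>M) = (\<integral>x. g x \<partial>P)" if "j \<in> {..<N}" for j
  proof -
    have cm: "(\<lambda>\<omega>. \<omega> j) \<in> measurable M P" unfolding M_def
      by (rule measurable_component_singleton[OF that])
    have "(\<integral>x. g x \<partial>P) = (\<integral>x. g x \<partial>distr M P (\<lambda>\<omega>. \<omega> j))"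
      unfolding M_def PP.PiM_component[OF that] ..
    also have "\<dots> = (\<integral>xs. g (xs j) \<partial>M)"
      by (rule integral_distr[OF cm gP])
    finally show ?thesis ..
  qed
  have gint: "integrable M (\<lambda>xs. g (xs j))" if "j \<in> {..<N}" for j
  proof -
    have cm: "(\<lambda>\<omega>. \<omega> j) \<in> measurable M P" unfolding M_def
      by (rule measurable_component_singleton[OF that])
    show ?thesis
    proof (rule M.integrable_const_bound[where B=1])
      show "AE x in M. norm (g (x j)) \<le> 1"
        by (rule AE_I2) (simp add: g_def)
    qed (rule measurable_compose[OF cm gP])
  qed
  have "(\<integral>xs. cnt (Y xs) \<partial>M) = (\<Sum>j<N. \<integral>xs. g (xs j) \<partial>M)"
    unfolding cntY by (rule Bochner_Integration.integral_sum[where f="\<lambda>j xs. g (xs j)"]) (rule gint)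
  also have "\<dots> = (\<Sum>j<N. \<integral>x. g x \<partial>P)" by (intro sum.cong refl gj)
  also have "\<dots> \<le> real N * p" using pb unfolding g_def by (simp add: mult_left_mono)
  finally have intle: "(\<integral>xs. cnt (Y xs) \<partial>M) \<le> real N * p" .
  have mk: "emeasure M {xs\<in>space M. cnt (Y xs) \<ge> real m + 1} \<le> (1 / (real m + 1)) * (\<integral>xs. cnt (Y xs) \<partial>M)"
  proof (rule integral_Markov_inequality[OF intY])
    show "AE x in M. 0 \<le> cnt (Y x)" by (rule AE_I2) (simp add: cnt_bd)
  qed simp
  define A where "A = {xs\<in>space M. cnt (Y xs) \<ge> real m + 1}"
  have Aev: "A \<in> sets M"
  proof -
    have "Measurable.pred M (\<lambda>xs. real m + 1 \<le> cnt (Y xs))"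
      by (rule pred_const_le[OF cntYm]) (rule borel_closed, rule closed_atLeast)
    then show ?thesis unfolding pred_def A_def .
  qed
  have "(1 / (real m + 1)) * (\<integral>xs. cnt (Y xs) \<partial>M) \<le> (1 / (real m + 1)) * (real N * p)"
    by (rule mult_left_mono[OF intle]) simp
  also have "\<dots> \<le> 1/2" using pN by (simp add: field_simps)
  finally have "emeasure M A \<le> ennreal (1/2)" using mk unfolding A_def
    by (meson ennreal_leI order_trans)
  then have mA: "M.prob A \<le> 1/2" using M.emeasure_eq_measure
    by (metis ennreal_le_iff le_divide_eq_1 less_eq_real_def zero_less_divide_1_iff zero_less_numeral)
  have int_cnt: "cnt X \<le> real m \<or> cnt X \<ge> real m + 1" for X
  proof -
    define k where "k = card {j\<in>{..<N}. \<not> (\<forall>i<n. X j i = c i)}"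
    have ck: "cnt X = real k"
      unfolding cnt_def k_def by (rule card_as_sum[symmetric]) simp
    have "k \<le> m \<or> m + 1 \<le> k" by linarith
    then show ?thesis using ck by (metis of_nat_1 of_nat_add of_nat_le_iff)
  qed
  have "{xs\<in>space M. cnt (Y xs) \<le> real m} = space M - A"
  proof -
    have nb: "\<not> (cnt X \<le> real m \<and> cnt X \<ge> real m + 1)" for X by linarith
    show ?thesis using int_cnt nb unfolding A_def by blast
  qed
  then have "M.prob (Y -` E \<inter> space M) = 1 - M.prob A"
    unfolding preE using M.prob_compl[OF Aev] by simp
  then have hb: "M.prob (Y -` E \<inter> space M) \<ge> 1/2" using mA by simp
  have "ennreal (sq / 2) \<le> ennreal (sq * M.prob (Y -` E \<inter> space M))"
    by (rule ennreal_leI) (use mult_left_mono[OF hb \<open>sq \<ge> 0\<close>] in simp)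
  also have "\<dots> = ennreal sq * emeasure M (Y -` E \<inter> space M)"
    by (simp add: M.emeasure_eq_measure ennreal_mult \<open>sq \<ge> 0\<close>)
  finally show ?thesis using R unfolding sq_def cbar_def by simp
qed



definition noise :: "nat \<Rightarrow> real \<Rightarrow> (nat \<Rightarrow> real) \<Rightarrow> (nat \<Rightarrow> real) measure" where
  "noise n p w = distr (measure_pmf (bernoulli_pmf p)) (vec_space n)
     (\<lambda>b. if b then (\<lambda>i\<in>{..<n}. (1 - p) / p * w i) else (\<lambda>i\<in>{..<n}. - w i))"

lemma noise_g_meas: "(\<lambda>b. if b then (\<lambda>i\<in>{..<n}. (1 - p) / p * w i) else (\<lambda>i\<in>{..<n}. - w i))
   \<in> measurable (measure_pmf (bernoulli_pmf p)) (vec_space n)"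
  by (simp add: space_vec)

lemma noise_int:
  assumes f: "f \<in> borel_measurable (vec_space n)" and p: "0 \<le> p" "p \<le> 1"
  shows "integrable (noise n p w) f"
    and "(\<integral>x. f x \<partial>noise n p w) = (1 - p) * f (\<lambda>i\<in>{..<n}. - w i) + p * f (\<lambda>i\<in>{..<n}. (1 - p) / p * w i)"
proof -
  let ?g = "(\<lambda>b. if b then (\<lambda>i\<in>{..<n}. (1 - p) / p * w i) else (\<lambda>i\<in>{..<n}. - w i))"
  have fin: "finite (set_pmf (bernoulli_pmf p))" by (rule finite_subset[OF subset_UNIV]) simp
  show "integrable (noise n p w) f"
    unfolding noise_def integrable_distr_eq[OF noise_g_meas f]
    by (rule integrable_measure_pmf_finite[OF fin])
  have "(\<integral>x. f x \<partial>noise n p w) = (\<integral>b. f (?g b) \<partial>measure_pmf (bernoulli_pmf p))"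
    unfolding noise_def by (rule integral_distr[OF noise_g_meas f])
  also have "\<dots> = (\<Sum>b\<in>UNIV. f (?g b) * pmf (bernoulli_pmf p) b)"
    by (rule integral_measure_pmf_real) auto
  also have "\<dots> = (1 - p) * f (\<lambda>i\<in>{..<n}. - w i) + p * f (\<lambda>i\<in>{..<n}. (1 - p) / p * w i)"
    using p by (simp add: UNIV_bool)
  finally show "(\<integral>x. f x \<partial>noise n p w) = (1 - p) * f (\<lambda>i\<in>{..<n}. - w i) + p * f (\<lambda>i\<in>{..<n}. (1 - p) / p * w i)" .
qed

lemma lin_meas: "(\<lambda>x. (\<Sum>i<n. v i * x i)) \<in> borel_measurable (vec_space n)"
proof (rule borel_measurable_sum)
  fix i assume "i \<in> {..<n}"
  then have "i < n" by simp
  show "(\<lambda>x. v i * x i) \<in> borel_measurable (vec_space n)"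
    by (rule borel_measurable_times[OF borel_measurable_const comp_meas[OF \<open>i < n\<close>]])
qed

lemma noise_Xi:
  assumes p: "0 < p" "p < 1" and w: "sqnorm n w \<le> p * s2"
  shows "noise n p w \<in> Xi n s2"
  unfolding Xi_def
proof (intro CollectI conjI allI impI)
  show "prob_space (noise n p w)" unfolding noise_def
    by (rule prob_space.prob_space_distr[OF prob_space_measure_pmf noise_g_meas])
  show "sets (noise n p w) = sets (vec_space n)" unfolding noise_def by simp
  fix i assume i: "i < n"
  have m1: "(\<lambda>x. x i) \<in> borel_measurable (vec_space n)" by (rule comp_meas[OF i])
  have m2: "(\<lambda>x. (x i)\<^sup>2) \<in> borel_measurable (vec_space n)" by (rule borel_measurable_power[OF m1])
  show "integrable (noise n p w) (\<lambda>x. x i)" using noise_int(1)[OF m1] p by simp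
  show "integrable (noise n p w) (\<lambda>x. (x i)\<^sup>2)" using noise_int(1)[OF m2] p by simp
  have "(\<integral>x. x i \<partial>noise n p w) = (1 - p) * (- w i) + p * ((1 - p) / p * w i)"
    using noise_int(2)[OF m1, of p w] p i by simp
  also have "\<dots> = 0" using p by (simp add: field_simps)
  finally show "(\<integral>x. x i \<partial>noise n p w) = 0" .
next
  fix v :: "nat \<Rightarrow> real" assume v: "(\<Sum>i<n. (v i)\<^sup>2) = 1"
  have m: "(\<lambda>x. (\<Sum>i<n. v i * x i)\<^sup>2) \<in> borel_measurable (vec_space n)"
    by (rule borel_measurable_power[OF lin_meas])
  define a where "a = (\<Sum>i<n. v i * w i)"
  have e1: "(\<Sum>i<n. v i * (\<lambda>i\<in>{..<n}. - w i) i) = - a"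
    unfolding a_def by (simp add: sum_negf[symmetric])
  have e2: "(\<Sum>i<n. v i * (\<lambda>i\<in>{..<n}. (1 - p) / p * w i) i) = (1 - p) / p * a"
    unfolding a_def by (simp add: sum_distrib_left mult.left_commute)
  have cs: "a\<^sup>2 \<le> sqnorm n w"
    using Cauchy_Schwarz_ineq_sum[of v w "{..<n}"] v unfolding a_def sqnorm_def by simp
  have "(\<integral>x. (\<Sum>i<n. v i * x i)\<^sup>2 \<partial>noise n p w) = (1 - p) * a\<^sup>2 + p * ((1 - p) / p * a)\<^sup>2"
    using noise_int(2)[OF m less_imp_le[OF p(1)] less_imp_le[OF p(2)], where w=w] unfolding e1 e2 by simp
  also have "\<dots> = (1 - p) / p * a\<^sup>2"
    using p by (simp add: field_simps power2_eq_square)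
  also have "\<dots> \<le> a\<^sup>2 / p"
  proof -
    have "(1 - p) * a\<^sup>2 \<le> 1 * a\<^sup>2" using p by (intro mult_right_mono) auto
    then show ?thesis using p by (simp add: divide_right_mono)
  qed
  also have "\<dots> \<le> s2"
    using cs w p by (simp add: pos_divide_le_eq mult.commute)
  finally show "(\<integral>x. (\<Sum>i<n. v i * x i)\<^sup>2 \<partial>noise n p w) \<le> s2" .
qed



lemma parallelogram_sq:
  "sqnorm n (\<lambda>i. mu1 i - mu0 i) / 2 \<le> sqnorm n (\<lambda>i. e i - mu0 i) + sqnorm n (\<lambda>i. e i - mu1 i)"
proof -
  have "(mu1 i - mu0 i)\<^sup>2 / 2 \<le> (e i - mu0 i)\<^sup>2 + (e i - mu1 i)\<^sup>2" for i
  proof -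
    have "(e i - mu0 i)\<^sup>2 + (e i - mu1 i)\<^sup>2 - (mu1 i - mu0 i)\<^sup>2 / 2 = 2 * (e i - (mu0 i + mu1 i) / 2)\<^sup>2"
      by (simp add: power2_eq_square field_simps)
    moreover have "0 \<le> 2 * (e i - (mu0 i + mu1 i) / 2)\<^sup>2" by simp
    ultimately show ?thesis by linarith
  qed
  then have "(\<Sum>i<n. (mu1 i - mu0 i)\<^sup>2 / 2) \<le> (\<Sum>i<n. (e i - mu0 i)\<^sup>2 + (e i - mu1 i)\<^sup>2)"
    by (intro sum_mono) auto
  then show ?thesis unfolding sqnorm_def by (simp add: sum.distrib sum_divide_distrib)
qed

lemma two_point:
  assumes K: "K \<subseteq> space (vec_space n)" and m0: "mu0 \<in> K" and m1: "mu1 \<in> K"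
    and dl: "sqnorm n (\<lambda>i. mu1 i - mu0 i) \<le> eps * sg\<^sup>2"
    and eps: "0 < eps" "eps < 1/2"
  shows "ennreal (sqnorm n (\<lambda>i. mu1 i - mu0 i) / 8) \<le> minimax_risk n N eps sg K"
proof -
  define p where "p = eps / 2"
  define m where "m = nat \<lfloor>eps * real N\<rfloor>"
  define c where "c = (\<lambda>i\<in>{..<n}. (mu0 i + mu1 i) / 2)"
  define w0 where "w0 = (\<lambda>i. mu0 i - c i)"
  define w1 where "w1 = (\<lambda>i. mu1 i - c i)"
  define C where "C = advC n N c m"
  define dd where "dd = sqnorm n (\<lambda>i. mu1 i - mu0 i)"
  have p: "0 < p" "p < 1" using eps by (auto simp: p_def)
  have cS: "c \<in> space (vec_space n)" by (simp add: c_def space_vec)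
  have Nn: "0 \<le> eps * real N" using eps by simp
  have mreal: "real m = of_int \<lfloor>eps * real N\<rfloor>" unfolding m_def using Nn by simp
  have mle: "real m \<le> eps * real N" using mreal by linarith
  have pN: "real N * p \<le> (real m + 1) / 2"
  proof -
    have "eps * real N < real m + 1" using mreal by linarith
    then show ?thesis by (simp add: p_def field_simps)
  qed
  have Cadv: "C \<in> adversaries n N eps" unfolding C_def by (rule advC_adv[OF cS mle])
  have sqw0: "sqnorm n w0 = dd / 4" and sqw1: "sqnorm n w1 = dd / 4"
    unfolding sqnorm_def w0_def w1_def dd_def c_def
    by (auto simp: sum_divide_distrib[symmetric] power2_eq_square field_simps intro!: sum.cong)
  have dd0: "0 \<le> dd" unfolding dd_def sqnorm_def by (intro sum_nonneg) auto
  have ddl: "dd \<le> eps * sg\<^sup>2" using dl unfolding dd_def .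
  have w0b: "sqnorm n w0 \<le> p * sg\<^sup>2" and w1b: "sqnorm n w1 \<le> p * sg\<^sup>2"
    unfolding p_def sqw0 sqw1 using dd0 ddl by auto
  define P0 where "P0 = noise n p w0"
  define P1 where "P1 = noise n p w1"
  have P0X: "P0 \<in> Xi n (sg\<^sup>2)" unfolding P0_def by (rule noise_Xi[OF p w0b])
  have P1X: "P1 \<in> Xi n (sg\<^sup>2)" unfolding P1_def by (rule noise_Xi[OF p w1b])
  have Pprops: "prob_space Q \<and> sets Q = sets (vec_space n)" if "Q \<in> Xi n (sg\<^sup>2)" for Q
    using that unfolding Xi_def by auto
  have pb: "(\<integral>x. (if (\<forall>i<n. mu i + x i = c i) then 0 else 1::real) \<partial>noise n p w) \<le> p"
    if "\<And>i. i < n \<Longrightarrow> mu i - w i = c i" for mu w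
  proof -
    have "(\<integral>x. (if (\<forall>i<n. mu i + x i = c i) then 0 else 1::real) \<partial>noise n p w)
       = (1 - p) * (if (\<forall>i<n. mu i + (\<lambda>i\<in>{..<n}. - w i) i = c i) then 0 else 1)
         + p * (if (\<forall>i<n. mu i + (\<lambda>i\<in>{..<n}. (1 - p) / p * w i) i = c i) then 0 else 1)"
      by (rule noise_int(2)[OF g_meas less_imp_le[OF p(1)] less_imp_le[OF p(2)]])
    also have "\<dots> \<le> p" using that p by auto
    finally show ?thesis .
  qed
  have pb0: "(\<integral>x. (if (\<forall>i<n. mu0 i + x i = c i) then 0 else 1::real) \<partial>P0) \<le> p"
    unfolding P0_def by (rule pb) (simp add: w0_def)
  have pb1: "(\<integral>x. (if (\<forall>i<n. mu1 i + x i = c i) then 0 else 1::real) \<partial>P1) \<le> p"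
    unfolding P1_def by (rule pb) (simp add: w1_def)
  show ?thesis
    unfolding minimax_risk_def
  proof (rule INF_greatest)
    fix est assume est: "est \<in> estimators n N"
    define e where "e = est (\<lambda>j\<in>{..<N}. c)"
    have r0: "ennreal (sqnorm n (\<lambda>i. e i - mu0 i) / 2) \<le> risk n N est mu0 P0 C"
      unfolding e_def C_def using P0X
      by (intro risk_lb[OF cS est _ _ pb0 pN]) (auto simp: Pprops)
    have r1: "ennreal (sqnorm n (\<lambda>i. e i - mu1 i) / 2) \<le> risk n N est mu1 P1 C"
      unfolding e_def C_def using P1X
      by (intro risk_lb[OF cS est _ _ pb1 pN]) (auto simp: Pprops)
    have sup: "risk n N est mu P C \<le> (SUP mu\<in>K. SUP P\<in>Xi n (sg\<^sup>2). SUP C\<in>adversaries n N eps. risk n N est mu P C)"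
      if "mu \<in> K" "P \<in> Xi n (sg\<^sup>2)" for mu P
      by (intro SUP_upper2[OF that(1)] SUP_upper2[OF that(2)] SUP_upper2[OF Cadv] order_refl)
    have "dd / 2 \<le> sqnorm n (\<lambda>i. e i - mu0 i) + sqnorm n (\<lambda>i. e i - mu1 i)"
      unfolding dd_def by (rule parallelogram_sq)
    then consider "dd / 4 \<le> sqnorm n (\<lambda>i. e i - mu0 i)" | "dd / 4 \<le> sqnorm n (\<lambda>i. e i - mu1 i)"
      by linarith
    then show "ennreal (sqnorm n (\<lambda>i. mu1 i - mu0 i) / 8) \<le> (SUP mu\<in>K. SUP P\<in>Xi n (sg\<^sup>2). SUP C\<in>adversaries n N eps. risk n N est mu P C)"
    proof cases
      case 1
      have "ennreal (dd / 8) \<le> ennreal (sqnorm n (\<lambda>i. e i - mu0 i) / 2)"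
        using 1 by (intro ennreal_leI) simp
      also note r0
      also note sup[OF m0 P0X]
      finally show ?thesis unfolding dd_def .
    next
      case 2
      have "ennreal (dd / 8) \<le> ennreal (sqnorm n (\<lambda>i. e i - mu1 i) / 2)"
        using 2 by (intro ennreal_leI) simp
      also note r1
      also note sup[OF m1 P1X]
      finally show ?thesis unfolding dd_def .
    qed
  qed
qed



definition Dn :: "nat \<Rightarrow> (nat \<Rightarrow> real) \<Rightarrow> (nat \<Rightarrow> real) \<Rightarrow> real" where
  "Dn n x y = sqrt (sqnorm n (\<lambda>i. x i - y i))"

lemma sqrt_sqnorm_L2: "sqrt (sqnorm n f) = L2_set f {..<n}"
  by (simp add: L2_set_def sqnorm_def)

lemma Dn_tri: "Dn n x y \<le> Dn n x z + Dn n z y"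
proof -
  have "L2_set (\<lambda>i. (x i - z i) + (z i - y i)) {..<n} \<le> L2_set (\<lambda>i. x i - z i) {..<n} + L2_set (\<lambda>i. z i - y i) {..<n}"
    by (rule L2_set_triangle_ineq)
  then show ?thesis unfolding Dn_def sqrt_sqnorm_L2 by simp
qed

lemma Dn_sym: "Dn n x y = Dn n y x"
  unfolding Dn_def sqnorm_def by (simp add: power2_commute)

lemma Dn_self: "Dn n x x = 0"
  unfolding Dn_def sqnorm_def by simp

lemma Dn_bound: "Dn n x y \<le> sqrt (sqnorm n x) + sqrt (sqnorm n y)"
proof -
  have "L2_set (\<lambda>i. x i + (- y i)) {..<n} \<le> L2_set x {..<n} + L2_set (\<lambda>i. - y i) {..<n}"
    by (rule L2_set_triangle_ineq)
  moreover have "L2_set (\<lambda>i. - y i) {..<n} = L2_set y {..<n}" by (simp add: L2_set_def)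
  ultimately show ?thesis unfolding Dn_def sqrt_sqnorm_L2 by simp
qed

theorem mainTheorem4:
  shows "\<exists>a>0. \<forall>(n::nat) (N::nat) (K::(nat \<Rightarrow> real) set) (sg::real) (eps::real).
     K \<subseteq> space (vec_space n) \<and> bounded_n n K \<and> star_shaped_n n K \<and>
     sg > 0 \<and> 0 < eps \<and> eps < 1/2 \<and> N \<ge> 1 \<longrightarrow>
     minimax_risk n N eps sg K \<ge> ennreal (a * min (eps * sg\<^sup>2) ((diam_n n K)\<^sup>2))"
proof (intro exI[of _ "1/128"] conjI allI impI)
  show "(0::real) < 1/128" by simp
  fix n N :: nat and K :: "(nat \<Rightarrow> real) set" and sg eps :: real
  assume H: "K \<subseteq> space (vec_space n) \<and> bounded_n n K \<and> star_shaped_n n K \<and>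
     sg > 0 \<and> 0 < eps \<and> eps < 1/2 \<and> N \<ge> 1"
  then have K: "K \<subseteq> space (vec_space n)" and sg: "sg > 0" and eps: "0 < eps" "eps < 1/2"
    by auto
  from H obtain ks where ks: "ks \<in> K" and star: "\<And>k t. k \<in> K \<Longrightarrow> t \<in> {0..1} \<Longrightarrow>
      (\<lambda>i\<in>{..<n}. (1 - t) * ks i + t * k i) \<in> K"
    unfolding star_shaped_n_def by blast
  from H obtain B where B: "\<And>x. x \<in> K \<Longrightarrow> sqnorm n x \<le> B"
    unfolding bounded_n_def by blast
  have Kne: "K \<noteq> {}" using ks by auto
  define R where "R = 2 * sqrt B"
  have DR: "Dn n x y \<le> R" if "x \<in> K" "y \<in> K" for x y
  proof -
    have "sqrt (sqnorm n x) \<le> sqrt B" "sqrt (sqnorm n y) \<le> sqrt B" using B that by auto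
    then show ?thesis using Dn_bound[of n x y] unfolding R_def by linarith
  qed
  define innr where "innr = (\<lambda>x. SUP y\<in>K. Dn n x y)"
  have bdd1: "bdd_above ((\<lambda>y. Dn n x y) ` K)" if "x \<in> K" for x
    by (rule bdd_aboveI2[where M=R]) (rule DR[OF that])
  have innrR: "innr x \<le> R" if "x \<in> K" for x
    unfolding innr_def using DR that Kne by (intro cSUP_least) auto
  have bdd2: "bdd_above (innr ` K)" by (rule bdd_aboveI2[where M=R]) (rule innrR)
  define d where "d = diam_n n K"
  have d_eq: "d = (SUP x\<in>K. innr x)" unfolding d_def diam_n_def innr_def Dn_def ..
  have d0: "0 \<le> d"
  proof -
    have "0 = Dn n ks ks" by (simp add: Dn_self)
    also have "\<dots> \<le> innr ks" unfolding innr_def by (rule cSUP_upper[OF ks bdd1[OF ks]])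
    also have "\<dots> \<le> d" unfolding d_eq by (rule cSUP_upper[OF ks bdd2])
    finally show ?thesis .
  qed
  show "minimax_risk n N eps sg K \<ge> ennreal (1/128 * min (eps * sg\<^sup>2) ((diam_n n K)\<^sup>2))"
  proof (cases "d = 0")
    case True
    then show ?thesis unfolding d_def[symmetric] using eps sg by simp
  next
    case False
    then have dpos: "d > 0" using d0 by simp
    have "\<exists>k\<in>K. d / 4 \<le> Dn n k ks"
    proof (rule ccontr)
      assume "\<not> ?thesis"
      then have lt: "Dn n k ks < d / 4" if "k \<in> K" for k using that by force
      have "innr x \<le> d / 2" if x: "x \<in> K" for x
        unfolding innr_def
      proof (rule cSUP_least[OF Kne])
        fix y assume y: "y \<in> K"
        have "Dn n x y \<le> Dn n x ks + Dn n ks y" by (rule Dn_tri)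
        also have "\<dots> = Dn n x ks + Dn n y ks" by (simp add: Dn_sym[of n ks y])
        finally show "Dn n x y \<le> d / 2" using lt[OF x] lt[OF y] by linarith
      qed
      then have "d \<le> d / 2" unfolding d_eq by (intro cSUP_least[OF Kne])
      then show False using dpos by simp
    qed
    then obtain k where k: "k \<in> K" and kr: "d / 4 \<le> Dn n k ks" by blast
    define r where "r = Dn n k ks"
    have rpos: "r > 0" using kr dpos unfolding r_def by linarith
    define dl2 where "dl2 = min (eps * sg\<^sup>2) (d\<^sup>2 / 16)"
    have dl20: "0 \<le> dl2" unfolding dl2_def using eps by simp
    define dl where "dl = sqrt dl2"
    have dl_le: "dl \<le> d / 4"
    proof -
      have "dl \<le> sqrt (d\<^sup>2 / 16)" unfolding dl_def dl2_def by (rule real_sqrt_le_mono) simp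
      also have "sqrt (d\<^sup>2 / 16) = d / 4" using d0 by (simp add: real_sqrt_divide)
      finally show ?thesis .
    qed
    define s where "s = dl / r"
    have s01: "s \<in> {0..1}" unfolding s_def using rpos dl_le kr dl20
      by (auto simp: dl_def r_def divide_le_eq_1)
    define mu1 where "mu1 = (\<lambda>i\<in>{..<n}. (1 - s) * ks i + s * k i)"
    have mu1K: "mu1 \<in> K" unfolding mu1_def by (rule star[OF k s01])
    have r2: "r\<^sup>2 = sqnorm n (\<lambda>i. k i - ks i)"
      unfolding r_def Dn_def by (simp add: sqnorm_def sum_nonneg)
    have "sqnorm n (\<lambda>i. mu1 i - ks i) = s\<^sup>2 * sqnorm n (\<lambda>i. k i - ks i)"
      unfolding sqnorm_def mu1_def
      by (auto simp: sum_distrib_left power2_eq_square algebra_simps intro!: sum.cong)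
    also have "\<dots> = s\<^sup>2 * r\<^sup>2" using r2 by simp
    also have "\<dots> = dl2" unfolding s_def dl_def using rpos dl20 by (simp add: power_divide)
    finally have sq: "sqnorm n (\<lambda>i. mu1 i - ks i) = dl2" .
    have "ennreal (sqnorm n (\<lambda>i. mu1 i - ks i) / 8) \<le> minimax_risk n N eps sg K"
      by (rule two_point[OF K ks mu1K _ eps]) (simp add: sq dl2_def)
    moreover have "ennreal (1/128 * min (eps * sg\<^sup>2) ((diam_n n K)\<^sup>2)) \<le> ennreal (sqnorm n (\<lambda>i. mu1 i - ks i) / 8)"
    proof -
      have epos: "0 < eps * sg\<^sup>2" using eps sg by simp
      have "1/128 * min (eps * sg\<^sup>2) (d\<^sup>2) \<le> dl2 / 8"
        unfolding dl2_def using epos by (auto simp: min_def)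
      then show ?thesis unfolding sq d_def[symmetric] by (rule ennreal_leI)
    qed
    ultimately show ?thesis by (rule order_trans[rotated])
  qed
qed


end
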